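(* Let $\|\cdot\|$ be a norm on $\mathbb{R}^d$ and $T:\mathbb{R}^d\to\mathbb{R}^d$ a $\gamma$-contraction, $\gamma\in(0,1)$, with unique fixed point $x^*$. Let $N\in\mathbb{N}$ be fixed, $x^0\in\mathbb{R}^d$, and $(x^n)$ generated by $x^n=(1-\beta_n)x^0+\beta_n(Tx^{n-1}+U_n)$ with $\beta_n=\frac{n}{n+1}$, where the random vectors $U_n$ satisfy, for some constant $\sigma>0$, $$\sigma_n^2\le\frac{\sigma^2}{n^2\gamma^{N-n}},\qquad \sigma_n:=\mathbb{E}(\|U_n\|),\quad n=1,\dots,N.$$ Then $\mathbb{E}(\|x^N-x^*\|)\le\dfrac{\|x^0-x^*\|+2\sigma}{(1-\gamma)(N+1)}$. *)

theory Defs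
  imports "HOL-Probability.Probability"
begin

definition is_norm :: "(real ^ 'd \<Rightarrow> real) \<Rightarrow> bool" where
  "is_norm nrm \<longleftrightarrow>
     (\<forall>x. 0 \<le> nrm x) \<and>
     (\<forall>x. nrm x = 0 \<longleftrightarrow> x = 0) \<and>
     (\<forall>c x. nrm (c *\<^sub>R x) = \<bar>c\<bar> * nrm x) \<and>
     (\<forall>x y. nrm (x + y) \<le> nrm x + nrm y)"

end

theory Submission
  imports Defs
begin

lemma nrm_basic:
  assumes "is_norm nrm"
  shows "nrm 0 = 0" "nrm (- x) = nrm x" "nrm (a - b) = nrm (b - a)"
        "nrm (x + y) \<le> nrm x + nrm y" "nrm (c *\<^sub>R x) = \<bar>c\<bar> * nrm x" "0 \<le> nrm x"
proof -
  show "nrm 0 = 0" using assms unfolding is_norm_def by blast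
  have "nrm (- x) = nrm ((-1) *\<^sub>R x)" by simp
  also have "\<dots> = \<bar>-1\<bar> * nrm x" using assms unfolding is_norm_def by blast
  also have "\<dots> = nrm x" by simp
  finally show n: "nrm (- x) = nrm x" .
  have "nrm (a - b) = nrm ((-1) *\<^sub>R (b - a))" by simp
  also have "\<dots> = \<bar>-1\<bar> * nrm (b - a)" using assms unfolding is_norm_def by blast
  also have "\<dots> = nrm (b - a)" by simp
  finally show "nrm (a - b) = nrm (b - a)" .
qed (use assms in \<open>auto simp: is_norm_def\<close>)

lemma nrm_sum:
  assumes "is_norm nrm" "finite A"
  shows "nrm (sum f A) \<le> (\<Sum>i\<in>A. nrm (f i))"
  using assms(2)
proof (induction A rule: finite_induct)
  case empty then show ?case using nrm_basic[OF assms(1)] by simp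
next
  case (insert a A)
  then show ?case using nrm_basic(4)[OF assms(1), of "f a" "sum f A"] by simp
qed

lemma nrm_cont:
  fixes nrm :: "real ^ 'd \<Rightarrow> real"
  assumes "is_norm nrm"
  shows "continuous_on UNIV nrm"
proof -
  define C where "C = (\<Sum>i\<in>UNIV. nrm (axis i (1::real) :: real ^ 'd))"
  have C0: "0 \<le> C" unfolding C_def by (intro sum_nonneg) (simp add: nrm_basic[OF assms])
  have bnd: "nrm z \<le> C * norm z" for z :: "real ^ 'd"
  proof -
    have "nrm z = nrm (\<Sum>i\<in>UNIV. (z$i) *\<^sub>R axis i 1)"
      using basis_expansion[of z] by (simp add: scalar_mult_eq_scaleR)
    also have "\<dots> \<le> (\<Sum>i\<in>UNIV. nrm ((z$i) *\<^sub>R axis i 1))" by (rule nrm_sum[OF assms]) simp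
    also have "\<dots> = (\<Sum>i\<in>UNIV. \<bar>z$i\<bar> * nrm (axis i 1 :: real ^ 'd))"
      by (simp add: nrm_basic[OF assms])
    also have "\<dots> \<le> (\<Sum>i\<in>UNIV. norm z * nrm (axis i 1 :: real ^ 'd))"
      by (intro sum_mono mult_right_mono) (auto simp: component_le_norm_cart nrm_basic[OF assms])
    also have "\<dots> = C * norm z" by (simp add: C_def sum_distrib_left mult.commute)
    finally show ?thesis .
  qed
  have "lipschitz_on C UNIV nrm"
  proof (rule lipschitz_onI)
    fix a b :: "real ^ 'd"
    have "nrm a \<le> nrm b + nrm (a - b)" using nrm_basic(4)[OF assms, of b "a - b"] by simp
    moreover have "nrm b \<le> nrm a + nrm (a - b)"
      using nrm_basic(4)[OF assms, of a "b - a"] nrm_basic(3)[OF assms, of a b] by simp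
    ultimately have "dist (nrm a) (nrm b) \<le> nrm (a - b)" by (simp add: dist_real_def)
    also have "\<dots> \<le> C * dist a b" using bnd[of "a - b"] by (simp add: dist_norm)
    finally show "dist (nrm a) (nrm b) \<le> C * dist a b" .
  qed (rule C0)
  then show ?thesis by (rule lipschitz_on_continuous_on)
qed


fun Bf :: "real \<Rightarrow> real \<Rightarrow> (nat \<Rightarrow> 'w \<Rightarrow> real) \<Rightarrow> nat \<Rightarrow> 'w \<Rightarrow> real" where
  "Bf e g u 0 \<omega> = e"
| "Bf e g u (Suc n) \<omega> = e + g * Bf e g u n \<omega> + real (Suc n) * u (Suc n) \<omega>"

lemma recur_eq:
  fixes a b c :: "real ^ 'd"
  assumes "a = (1 - real (Suc n) / real (Suc n + 1)) *\<^sub>R b + (real (Suc n) / real (Suc n + 1)) *\<^sub>R c"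
  shows "real (Suc n + 1) *\<^sub>R a = b + real (Suc n) *\<^sub>R c"
proof -
  have h: "real (Suc n + 1) * (1 - real (Suc n) / real (Suc n + 1)) = 1"
    by (simp add: field_simps)
  have h2: "real (Suc n + 1) * (real (Suc n) / real (Suc n + 1)) = real (Suc n)"
    by (simp add: field_simps)
  show ?thesis unfolding assms scaleR_add_right scaleR_scaleR h h2 by simp
qed

theorem theorem4:
  fixes nrm :: "real ^ 'd \<Rightarrow> real"
    and T :: "real ^ 'd \<Rightarrow> real ^ 'd"
    and \<gamma> \<sigma> :: real
    and xs x0 :: "real ^ 'd"
    and N :: nat
    and M :: "'w measure"
    and U :: "nat \<Rightarrow> 'w \<Rightarrow> real ^ 'd"
    and x :: "nat \<Rightarrow> 'w \<Rightarrow> real ^ 'd"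
  assumes "is_norm nrm"
    and "0 < \<gamma>" and "\<gamma> < 1"
    and "\<forall>y z. nrm (T y - T z) \<le> \<gamma> * nrm (y - z)"
    and "T xs = xs"
    and "\<forall>y. T y = y \<longrightarrow> y = xs"
    and "prob_space M"
    and "\<forall>n\<in>{1..N}. U n \<in> borel_measurable M"
    and "0 < \<sigma>"
    and "\<forall>n\<in>{1..N}. (\<integral>\<^sup>+ \<omega>. ennreal (nrm (U n \<omega>)) \<partial>M) ^ 2
            \<le> ennreal (\<sigma> ^ 2 / (real n ^ 2 * \<gamma> ^ (N - n)))"
    and "\<forall>\<omega>. x 0 \<omega> = x0"
    and "\<forall>n\<in>{1..N}. \<forall>\<omega>. x n \<omega> =
            (1 - real n / real (n + 1)) *\<^sub>R x0
            + (real n / real (n + 1)) *\<^sub>R (T (x (n - 1) \<omega>) + U n \<omega>)"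
  shows "(\<integral>\<^sup>+ \<omega>. ennreal (nrm (x N \<omega> - xs)) \<partial>M)
           \<le> ennreal ((nrm (x0 - xs) + 2 * \<sigma>) / ((1 - \<gamma>) * real (N + 1)))"
  proof -
  note nb = nrm_basic[OF assms(1)]
  interpret P: prob_space M by (rule assms(7))
  define e where "e = nrm (x0 - xs)"
  define s where "s = sqrt \<gamma>"
  define B where "B = Bf e \<gamma> (\<lambda>m \<omega>. nrm (U m \<omega>))"
  have e0: "0 \<le> e" unfolding e_def by (rule nb(6))
  have s0: "0 < s" "s < 1" using assms(2,3) by (auto simp: s_def)
  have gs: "\<gamma> = s * s" using assms(2) by (simp add: s_def)
  have B0: "B 0 \<omega> = e" for \<omega> by (simp add: B_def)
  have BS: "B (Suc n) \<omega> = e + \<gamma> * B n \<omega> + real (Suc n) * nrm (U (Suc n) \<omega>)" for n \<omega>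
    by (simp add: B_def)
  have Bnn: "0 \<le> B n \<omega>" for n \<omega>
    by (induction n) (use e0 assms(2) nb(6) in \<open>auto simp: B0 BS\<close>)
  have pw: "\<forall>\<omega>. real (n+1) * nrm (x n \<omega> - xs) \<le> B n \<omega>" if "n \<le> N" for n
    using that
  proof (induction n)
    case 0 then show ?case using assms(11) by (simp add: B0 e_def)
  next
    case (Suc n)
    show ?case
    proof
      fix \<omega>
      have IH: "real (n+1) * nrm (x n \<omega> - xs) \<le> B n \<omega>" using Suc by simp
      have r: "x (Suc n) \<omega> = (1 - real (Suc n) / real (Suc n + 1)) *\<^sub>R x0
            + (real (Suc n) / real (Suc n + 1)) *\<^sub>R (T (x n \<omega>) + U (Suc n) \<omega>)"
        using assms(12) Suc.prems by force
      have eq: "real (Suc n + 1) *\<^sub>R (x (Suc n) \<omega> - xs)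
          = (x0 - xs) + real (Suc n) *\<^sub>R (T (x n \<omega>) - T xs) + real (Suc n) *\<^sub>R U (Suc n) \<omega>"
      proof -
        have "real (Suc n + 1) *\<^sub>R (x (Suc n) \<omega> - xs) = real (Suc n + 1) *\<^sub>R x (Suc n) \<omega> - real (Suc n + 1) *\<^sub>R xs"
          by (simp add: scaleR_diff_right)
        also have "\<dots> = x0 + real (Suc n) *\<^sub>R (T (x n \<omega>) + U (Suc n) \<omega>) - real (Suc n + 1) *\<^sub>R xs"
          using recur_eq[OF r] by simp
        also have "\<dots> = (x0 - xs) + real (Suc n) *\<^sub>R (T (x n \<omega>) - T xs) + real (Suc n) *\<^sub>R U (Suc n) \<omega>"
        proof -
          have xe: "real (Suc n + 1) *\<^sub>R xs = xs + real (Suc n) *\<^sub>R T xs"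
            using assms(5) scaleR_add_left[of "real (Suc n)" 1 xs] by (simp add: add.commute)
          show ?thesis unfolding xe scaleR_diff_right scaleR_add_right by (simp add: algebra_simps)
        qed
        finally show ?thesis .
      qed
      have "real (Suc n + 1) * nrm (x (Suc n) \<omega> - xs) = nrm (real (Suc n + 1) *\<^sub>R (x (Suc n) \<omega> - xs))"
        by (simp add: nb(5))
      also have "\<dots> \<le> nrm (x0 - xs) + nrm (real (Suc n) *\<^sub>R (T (x n \<omega>) - T xs)) + nrm (real (Suc n) *\<^sub>R U (Suc n) \<omega>)"
        unfolding eq by (meson add_mono nb(4) order_trans order_refl)
      also have "\<dots> = e + real (Suc n) * nrm (T (x n \<omega>) - T xs) + real (Suc n) * nrm (U (Suc n) \<omega>)"
        by (simp add: nb(5) e_def)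
      also have "\<dots> \<le> e + real (Suc n) * (\<gamma> * nrm (x n \<omega> - xs)) + real (Suc n) * nrm (U (Suc n) \<omega>)"
        using assms(4) by (intro add_mono mult_left_mono) auto
      also have "\<dots> = e + \<gamma> * (real (n+1) * nrm (x n \<omega> - xs)) + real (Suc n) * nrm (U (Suc n) \<omega>)"
        by simp
      also have "\<dots> \<le> e + \<gamma> * B n \<omega> + real (Suc n) * nrm (U (Suc n) \<omega>)"
        using IH assms(2) by (intro add_mono mult_left_mono) auto
      finally show "real (Suc n + 1) * nrm (x (Suc n) \<omega> - xs) \<le> B (Suc n) \<omega>" by (simp add: BS)
    qed
  qed
  have umeas: "(\<lambda>\<omega>. nrm (U m \<omega>)) \<in> borel_measurable M" if "m \<in> {1..N}" for m
    using borel_measurable_continuous_on[OF nrm_cont[OF assms(1)]] assms(8) that by blast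
  have Bmeas: "(\<lambda>\<omega>. B n \<omega>) \<in> borel_measurable M" if "n \<le> N" for n
    using that
  proof (induction n)
    case 0 then show ?case by (simp add: B0)
  next
    case (Suc n)
    have "(\<lambda>\<omega>. nrm (U (Suc n) \<omega>)) \<in> borel_measurable M" using umeas Suc.prems by simp
    then show ?case using Suc by (simp add: BS)
  qed
  have Ub: "ennreal (real m) * (\<integral>\<^sup>+ \<omega>. ennreal (nrm (U m \<omega>)) \<partial>M) \<le> ennreal (\<sigma> / s ^ (N - m))"
    if m: "m \<in> {1..N}" for m
  proof -
    let ?I = "\<integral>\<^sup>+ \<omega>. ennreal (nrm (U m \<omega>)) \<partial>M"
    define c where "c = \<sigma> / (real m * s ^ (N - m))"
    have c0: "0 \<le> c" using assms(9) s0 by (simp add: c_def)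
    have "\<sigma> ^ 2 / (real m ^ 2 * \<gamma> ^ (N - m)) = c ^ 2"
      by (simp add: c_def gs power_divide power_mult_distrib power2_eq_square)
    hence h: "?I ^ 2 \<le> ennreal (c ^ 2)" using assms(10) m by metis
    have "?I \<noteq> \<top>"
    proof
      assume "?I = \<top>" then show False using h by (simp add: top_unique)
    qed
    then obtain r where r: "?I = ennreal r" "0 \<le> r" by (cases ?I) auto
    have "ennreal (r ^ 2) \<le> ennreal (c ^ 2)" using h r by (simp add: ennreal_power)
    hence "r ^ 2 \<le> c ^ 2" using c0 by (simp add: ennreal_le_iff)
    hence rc: "r \<le> c" using c0 by (rule power2_le_imp_le)
    have "real m * r \<le> real m * c" using rc by (intro mult_left_mono) auto
    also have "real m * c = \<sigma> / s ^ (N - m)" using m by (simp add: c_def)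
    finally have "real m * r \<le> \<sigma> / s ^ (N - m)" .
    then show ?thesis using r by (simp add: ennreal_mult[symmetric] ennreal_leI)
  qed
  define bnd where "bnd n = e / (1 - \<gamma>) + 2 * \<sigma> / ((1 - \<gamma>) * s ^ (N - n))" for n
  have Jb: "(\<integral>\<^sup>+ \<omega>. ennreal (B n \<omega>) \<partial>M) \<le> ennreal (bnd n)" if "n \<le> N" for n
    using that
  proof (induction n)
    case 0
    have "e \<le> e / (1 - \<gamma>)" using e0 assms(2,3) by (simp add: field_simps)
    also have "\<dots> \<le> bnd 0" unfolding bnd_def using assms(3,9) s0 by simp
    finally show ?case by (simp add: B0 P.emeasure_space_1 ennreal_leI)
  next
    case (Suc n)
    define t where "t = s ^ (N - Suc n)"
    have t0: "0 < t" using s0 by (simp add: t_def)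
    have st: "s ^ (N - n) = s * t" using Suc.prems unfolding t_def by (metis Suc_diff_Suc Suc_le_lessD power_Suc)
    have um: "(\<lambda>\<omega>. nrm (U (Suc n) \<omega>)) \<in> borel_measurable M" using umeas Suc.prems by simp
    have bm: "(\<lambda>\<omega>. B n \<omega>) \<in> borel_measurable M" using Bmeas Suc.prems by simp
    have bn0: "0 \<le> bnd n" unfolding bnd_def using e0 assms(3,9) s0 by simp
    have pe: "ennreal (B (Suc n) \<omega>) = ennreal e + (ennreal \<gamma> * ennreal (B n \<omega>)
            + ennreal (real (Suc n)) * ennreal (nrm (U (Suc n) \<omega>)))" for \<omega>
    proof -
      have a: "0 \<le> \<gamma> * B n \<omega>" using assms(2) Bnn by simp
      have b: "0 \<le> real (Suc n) * nrm (U (Suc n) \<omega>)" using nb(6) by simp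
      have "B (Suc n) \<omega> = e + (\<gamma> * B n \<omega> + real (Suc n) * nrm (U (Suc n) \<omega>))"
        by (simp only: BS add.assoc)
      hence "ennreal (B (Suc n) \<omega>) = ennreal e + (ennreal (\<gamma> * B n \<omega>) + ennreal (real (Suc n) * nrm (U (Suc n) \<omega>)))"
        using ennreal_plus[OF e0 add_nonneg_nonneg[OF a b]] ennreal_plus[OF a b] by simp
      also have "\<dots> = ennreal e + (ennreal \<gamma> * ennreal (B n \<omega>)
            + ennreal (real (Suc n)) * ennreal (nrm (U (Suc n) \<omega>)))"
        using ennreal_mult[of \<gamma> "B n \<omega>"] ennreal_mult[of "real (Suc n)" "nrm (U (Suc n) \<omega>)"]
          assms(2) Bnn nb(6) by simp
      finally show ?thesis .
    qed
    have m1: "(\<lambda>\<omega>. ennreal \<gamma> * ennreal (B n \<omega>)) \<in> borel_measurable M" using bm by measurable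
    have m2: "(\<lambda>\<omega>. ennreal (real (Suc n)) * ennreal (nrm (U (Suc n) \<omega>))) \<in> borel_measurable M" using um by measurable
    have "(\<integral>\<^sup>+ \<omega>. ennreal (B (Suc n) \<omega>) \<partial>M)
       = (\<integral>\<^sup>+ \<omega>. ennreal e + (ennreal \<gamma> * ennreal (B n \<omega>)
            + ennreal (real (Suc n)) * ennreal (nrm (U (Suc n) \<omega>))) \<partial>M)"
      by (simp only: pe)
    also have "\<dots> = (\<integral>\<^sup>+ \<omega>. ennreal e \<partial>M) + ((\<integral>\<^sup>+ \<omega>. ennreal \<gamma> * ennreal (B n \<omega>) \<partial>M)
            + (\<integral>\<^sup>+ \<omega>. ennreal (real (Suc n)) * ennreal (nrm (U (Suc n) \<omega>)) \<partial>M))"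
    proof -
      have m0: "(\<lambda>\<omega>. ennreal e) \<in> borel_measurable M" by simp
      show ?thesis by (simp only: nn_integral_add[OF m0 borel_measurable_add[OF m1 m2]] nn_integral_add[OF m1 m2])
    qed
    also have "\<dots> = ennreal e + (ennreal \<gamma> * (\<integral>\<^sup>+ \<omega>. ennreal (B n \<omega>) \<partial>M)
            + ennreal (real (Suc n)) * (\<integral>\<^sup>+ \<omega>. ennreal (nrm (U (Suc n) \<omega>)) \<partial>M))"
      using um bm by (simp only: nn_integral_cmult nn_integral_const P.emeasure_space_1 mult_1_right measurable_compose[OF _ measurable_ennreal])
    also have "\<dots> \<le> ennreal e + (ennreal \<gamma> * ennreal (bnd n) + ennreal (\<sigma> / t))"
      using Suc Ub[of "Suc n"] by (intro add_mono mult_left_mono) (auto simp: t_def)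
    also have "\<dots> = ennreal (e + \<gamma> * bnd n + \<sigma> / t)"
    proof -
      have a: "0 \<le> \<gamma> * bnd n" using assms(2) bn0 by simp
      have b: "0 \<le> \<sigma> / t" using assms(9) t0 by simp
      show ?thesis using ennreal_plus[OF e0 add_nonneg_nonneg[OF a b]] ennreal_plus[OF a b]
          ennreal_mult[of \<gamma> "bnd n"] assms(2) bn0 by (simp add: add.assoc)
    qed
    also have "\<dots> \<le> ennreal (bnd (Suc n))"
    proof (rule ennreal_leI)
      have "0 \<le> (1 - s) * (1 - s)" by simp
      hence "2 * s \<le> 1 + s * s" by (simp add: algebra_simps)
      hence k: "2 * s + (1 - \<gamma>) \<le> 2" by (simp add: gs)
      have "e + \<gamma> * bnd n + \<sigma> / t = e / (1 - \<gamma>) + \<sigma> / t * ((2 * s + (1 - \<gamma>)) / (1 - \<gamma>))"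
      proof -
        have g1: "1 - \<gamma> \<noteq> 0" using assms(3) by simp
        have h1: "e + \<gamma> * (e / (1 - \<gamma>)) = e / (1 - \<gamma>)" using g1 by (simp add: field_simps)
        have h2: "\<gamma> * (2 * \<sigma> / ((1 - \<gamma>) * (s * t))) = \<sigma> / t * (2 * s / (1 - \<gamma>))"
          using s0 t0 g1 by (simp add: gs field_simps)
        have h3: "\<sigma> / t * (2 * s / (1 - \<gamma>)) + \<sigma> / t = \<sigma> / t * ((2 * s + (1 - \<gamma>)) / (1 - \<gamma>))"
          using g1 by (simp add: add_divide_distrib distrib_left)
        have "e + \<gamma> * bnd n + \<sigma> / t = (e + \<gamma> * (e / (1 - \<gamma>))) + (\<gamma> * (2 * \<sigma> / ((1 - \<gamma>) * (s * t))) + \<sigma> / t)"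
          unfolding bnd_def st by (simp add: distrib_left)
        then show ?thesis using h1 h2 h3 by simp
      qed
      also have "\<dots> \<le> e / (1 - \<gamma>) + \<sigma> / t * (2 / (1 - \<gamma>))"
        using k assms(3,9) t0 by (intro add_left_mono mult_left_mono divide_right_mono) auto
      also have "\<dots> = bnd (Suc n)" unfolding bnd_def t_def by (simp add: mult.commute)
      finally show "e + \<gamma> * bnd n + \<sigma> / t \<le> bnd (Suc n)" .
    qed
    finally show ?case .
  qed
  have "(\<integral>\<^sup>+ \<omega>. ennreal (nrm (x N \<omega> - xs)) \<partial>M)
      \<le> (\<integral>\<^sup>+ \<omega>. ennreal (1 / real (N + 1)) * ennreal (B N \<omega>) \<partial>M)"
  proof (rule nn_integral_mono)
    fix \<omega>
    have "nrm (x N \<omega> - xs) \<le> B N \<omega> / real (N + 1)"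
      using pw[of N] by (simp add: field_simps)
    then show "ennreal (nrm (x N \<omega> - xs)) \<le> ennreal (1 / real (N + 1)) * ennreal (B N \<omega>)"
      using ennreal_mult[of "1 / real (N + 1)" "B N \<omega>"] Bnn[of N \<omega>] ennreal_leI by fastforce
  qed
  also have "\<dots> = ennreal (1 / real (N + 1)) * (\<integral>\<^sup>+ \<omega>. ennreal (B N \<omega>) \<partial>M)"
    using Bmeas[of N] by (simp add: nn_integral_cmult)
  also have "\<dots> \<le> ennreal (1 / real (N + 1)) * ennreal (bnd N)"
    using Jb[of N] by (intro mult_left_mono) auto
  also have "\<dots> = ennreal ((nrm (x0 - xs) + 2 * \<sigma>) / ((1 - \<gamma>) * real (N + 1)))"
  proof -
    have "bnd N = (nrm (x0 - xs) + 2 * \<sigma>) / (1 - \<gamma>)" by (simp add: bnd_def e_def add_divide_distrib)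
    moreover have "0 \<le> bnd N" using e0 assms(3,9) by (simp add: bnd_def)
    ultimately show ?thesis using ennreal_mult[of "1 / real (N + 1)" "bnd N"] by (simp add: mult.commute)
  qed
  finally show ?thesis .
qed

end
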